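(* $H_1(\Lambda_1(\mathbb{Q}\mathrm{Par}_2);\mathbb{Q})\cong\mathbb{Q}^4$.
   Context: The nonsymmetric operad $\mathrm{Par}_2$: $\mathrm{Par}_2((1))=\{1\}$, and for $m\ge2$, $\mathrm{Par}_2((m))=\{x_1^ax_2^b: a,b\ge1, a+b=m\}$. Partial composition: for $c=x_1^{a_1}x_2^{a_2}$ and $d$ a monomial of degree $j$ (or $d=1$ of degree 1), $c\circ_sd$ multiplies out by raising the exponent of the variable $x_l$ whose block contains $s$ (i.e. $l=1$ if $s\le a_1$, $l=2$ otherwise) by $j-1$; $1$ is a two-sided unit. $\Lambda_1(\mathbb{Q}\mathrm{Par}_2)=\bigoplus_{m\ge2}\mathbb{Q}\mathrm{Par}_2((m))$ with Lie bracket $[c,d]=\sum_{t=1}^{j}d\circ_tc-\sum_{s=1}^{k}c\circ_sd$ for $c$ of degree $k$, $d$ of degree $j$. $H_1$ is Lie algebra homology, i.e. the abelianization. *)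

theory Defs
  imports Complex_Main "HOL-Library.Numeral_Type" "HOL-Library.Function_Algebras"
begin

text \<open>Basis of Par_2: the pair (a,b) stands for the monomial x1^a x2^b (a,b >= 1),
  of arity a + b.  Elements of the Q-vector space Q Par_2 are finitely supported
  functions from pairs to rat.\<close>

definition smultQ :: "rat \<Rightarrow> ('i \<Rightarrow> rat) \<Rightarrow> ('i \<Rightarrow> rat)" where
  "smultQ r f = (\<lambda>i. r * f i)"

definition deltaQ :: "'i \<Rightarrow> ('i \<Rightarrow> rat)" where
  "deltaQ p = (\<lambda>i. if i = p then 1 else 0)"

definition par2_deg :: "nat \<times> nat \<Rightarrow> nat" where
  "par2_deg c = fst c + snd c"

text \<open>Partial composition c o_s d for monomials c = x1^a1 x2^a2 and d of degree j:
  raise the exponent of the variable whose block contains s by j - 1.\<close>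
definition par2_comp :: "nat \<times> nat \<Rightarrow> nat \<Rightarrow> nat \<times> nat \<Rightarrow> nat \<times> nat" where
  "par2_comp c s d =
     (if s \<le> fst c then (fst c + par2_deg d - 1, snd c)
      else (fst c, snd c + par2_deg d - 1))"

definition par2_brk :: "nat \<times> nat \<Rightarrow> nat \<times> nat \<Rightarrow> (nat \<times> nat \<Rightarrow> rat)" where
  "par2_brk c d =
     (\<Sum>t\<in>{1..par2_deg d}. deltaQ (par2_comp d t c))
     - (\<Sum>s\<in>{1..par2_deg c}. deltaQ (par2_comp c s d))"

text \<open>Underlying space of Lambda_1(Q Par_2) = direct sum over m >= 2 of Q Par_2((m)).\<close>
definition Lam1 :: "(nat \<times> nat \<Rightarrow> rat) set" where
  "Lam1 = {f. finite {i. f i \<noteq> 0} \<and> (\<forall>i. f i \<noteq> 0 \<longrightarrow> fst i \<ge> 1 \<and> snd i \<ge> 1)}"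

definition lie :: "(nat \<times> nat \<Rightarrow> rat) \<Rightarrow> (nat \<times> nat \<Rightarrow> rat) \<Rightarrow> (nat \<times> nat \<Rightarrow> rat)" where
  "lie x y = (\<Sum>c\<in>{i. x i \<noteq> 0}. \<Sum>d\<in>{i. y i \<noteq> 0}. smultQ (x c * y d) (par2_brk c d))"

definition derived :: "(nat \<times> nat \<Rightarrow> rat) set" where
  "derived = module.span smultQ {lie x y | x y. x \<in> Lam1 \<and> y \<in> Lam1}"

end

theory Submission
  imports Defs
begin


lemma smultQ_eq: "smultQ r x = (\<lambda>_. r) * x"
  by (simp add: smultQ_def times_fun_def)

interpretation Q: module smultQ
  by unfold_locales (auto simp: smultQ_def algebra_simps)

lemma sum_fun_apply: "(\<Sum>a\<in>A. f a) x = (\<Sum>a\<in>A. f a x)"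
  by (induct A rule: infinite_finite_induct) auto

lemma sum_split_if:
  "(\<Sum>t\<in>{1..p+q}. if t \<le> p then X else Y) = of_nat p * X + of_nat q * (Y::'a::comm_ring_1)"
proof -
  have u: "{1..p+q} = {1..p} \<union> {p+1..p+q}" by auto
  have "(\<Sum>t\<in>{1..p+q}. if t \<le> p then X else Y) = (\<Sum>t\<in>{1..p}. if t \<le> p then X else Y) + (\<Sum>t\<in>{p+1..p+q}. if t \<le> p then X else Y)"
    unfolding u by (rule sum.union_disjoint) auto
  also have "\<dots> = (\<Sum>t\<in>{1..p}. X) + (\<Sum>t\<in>{p+1..p+q}. Y)"
    by (intro arg_cong2[where f="(+)"] sum.cong) auto
  finally show ?thesis by simp
qed

lemma brk_formula:
  "par2_brk (a,b) (a',b') = of_nat a' * deltaQ (a' + (a+b) - 1, b') + of_nat b' * deltaQ (a', b' + (a+b) - 1)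
     - of_nat a * deltaQ (a + (a'+b') - 1, b) - of_nat b * deltaQ (a, b + (a'+b') - 1)"
proof -
  have 1: "(\<Sum>t\<in>{1..a'+b'}. deltaQ (par2_comp (a',b') t (a,b))) = of_nat a' * deltaQ (a' + (a+b) - 1, b') + of_nat b' * deltaQ (a', b' + (a+b) - 1)"
    unfolding par2_comp_def par2_deg_def using sum_split_if by (simp add: if_distrib cong: if_cong)
  have 2: "(\<Sum>t\<in>{1..a+b}. deltaQ (par2_comp (a,b) t (a',b'))) = of_nat a * deltaQ (a + (a'+b') - 1, b) + of_nat b * deltaQ (a, b + (a'+b') - 1)"
    unfolding par2_comp_def par2_deg_def using sum_split_if by (simp add: if_distrib cong: if_cong)
  show ?thesis unfolding par2_brk_def using 1 2 by (simp add: par2_deg_def)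
qed

lemma supp_delta: "{i. deltaQ c i \<noteq> 0} = {c}"
  by (auto simp: deltaQ_def)

lemma lie_delta: "lie (deltaQ c) (deltaQ d) = par2_brk c d"
  unfolding lie_def supp_delta by (simp add: deltaQ_def smultQ_def)

lemma delta_Lam1: "fst c \<ge> 1 \<Longrightarrow> snd c \<ge> 1 \<Longrightarrow> deltaQ c \<in> Lam1"
  unfolding Lam1_def supp_delta by (auto simp: deltaQ_def split: if_splits)

lemma brk_D: "a \<ge> 1 \<Longrightarrow> b \<ge> 1 \<Longrightarrow> a' \<ge> 1 \<Longrightarrow> b' \<ge> 1 \<Longrightarrow> par2_brk (a,b) (a',b') \<in> derived"
proof -
  assume h: "a \<ge> 1" "b \<ge> 1" "a' \<ge> 1" "b' \<ge> 1"
  have l1: "deltaQ (a,b) \<in> Lam1" "deltaQ (a',b') \<in> Lam1" using h by (auto intro!: delta_Lam1)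
  have "par2_brk (a,b) (a',b') \<in> {lie x y | x y. x \<in> Lam1 \<and> y \<in> Lam1}"
    unfolding mem_Collect_eq by (rule exI[of _ "deltaQ (a,b)"], rule exI[of _ "deltaQ (a',b')"]) (simp add: l1 lie_delta)
  then show ?thesis unfolding derived_def by (rule Q.span_base)
qed

lemma Dadd: "x \<in> derived \<Longrightarrow> y \<in> derived \<Longrightarrow> x + y \<in> derived"
  unfolding derived_def by (rule Q.span_add)
lemma Ddiff: "x \<in> derived \<Longrightarrow> y \<in> derived \<Longrightarrow> x - y \<in> derived"
  unfolding derived_def by (rule Q.span_diff)
lemma Dsc: "x \<in> derived \<Longrightarrow> smultQ r x \<in> derived"
  unfolding derived_def by (rule Q.span_scale)
lemma Dnat: "x \<in> derived \<Longrightarrow> of_nat k * x \<in> derived"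
proof -
  assume h: "x \<in> derived"
  have "of_nat k * x = smultQ (of_nat k) x" by (simp add: smultQ_def fun_eq_iff)
  then show ?thesis using Dsc[OF h, of "of_nat k"] by simp
qed
lemma Dnum: "x \<in> derived \<Longrightarrow> numeral k * x \<in> derived"
proof -
  assume h: "x \<in> derived"
  have "numeral k * x = of_nat (numeral k) * x" by simp
  then show ?thesis using Dnat[OF h, of "numeral k"] by simp
qed
lemma Dcancel: "of_nat k * x \<in> derived \<Longrightarrow> k > 0 \<Longrightarrow> x \<in> derived"
proof -
  assume a: "of_nat k * x \<in> derived" "k > 0"
  have eq: "smultQ (1 / of_nat k) (of_nat k * x) = x" using a(2) by (simp add: smultQ_def fun_eq_iff)
  from Dsc[OF a(1), of "1 / of_nat k"] show ?thesis unfolding eq .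
qed



lemma ab1: "(a + b - c) + (c + a - b) = of_nat 2 * (a::'a::comm_ring_1)"
  by (simp add: algebra_simps mult_2)
lemma ab2: "(a + b - c) - (c + a - b) = of_nat 2 * (b - (c::'a::comm_ring_1))"
  by (simp add: algebra_simps mult_2)
lemma deg4: "deltaQ (2,2) \<in> derived" "deltaQ (1,3) - deltaQ (3,1) \<in> derived"
proof -
  have r1: "par2_brk (1,1) (1,2) \<in> derived" "par2_brk (1,1) (2,1) \<in> derived" by (rule brk_D; simp)+
  have e1: "par2_brk (1,1) (1,2) = deltaQ (2,2) + deltaQ (1,3) - deltaQ (3,1)"
    by (simp add: brk_formula eval_nat_numeral)
  have e2: "par2_brk (1,1) (2,1) = deltaQ (3,1) + deltaQ (2,2) - deltaQ (1,3)"
    by (simp add: brk_formula eval_nat_numeral)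
  have "of_nat 2 * deltaQ (2,2) \<in> derived" using Dadd[OF r1] unfolding e1 e2 ab1 .
  then show "deltaQ (2,2) \<in> derived" by (rule Dcancel) simp
  have "of_nat 2 * (deltaQ (1,3) - deltaQ (3,1)) \<in> derived" using Ddiff[OF r1] unfolding e1 e2 ab2 .
  then show "deltaQ (1,3) - deltaQ (3,1) \<in> derived" by (rule Dcancel) simp
qed

lemma c5:
  fixes p q r s :: "'a::comm_ring_1"
  shows "13*(q + 2 * p - s) - 5*(2 * r + 2 * q - s - p) + 7*(r + 2 * s - p) - 3*(2 * s + q - r - 2 * p) = of_nat 30 * p"
    "11*(q + 2 * p - s) + 5*(2 * r + 2 * q - s - p) - (r + 2 * s - p) + 9*(2 * s + q - r - 2 * p) = of_nat 30 * q"
    "5*(2 * r + 2 * q - s - p) + 11*(r + 2 * s - p) - (q + 2 * p - s) - 9*(2 * s + q - r - 2 * p) = of_nat 30 * r"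
    "7*(q + 2 * p - s) - 5*(2 * r + 2 * q - s - p) + 13*(r + 2 * s - p) + 3*(2 * s + q - r - 2 * p) = of_nat 30 * s"
  by (simp_all add: algebra_simps)

lemma deg5: "deltaQ (1,4) \<in> derived" "deltaQ (2,3) \<in> derived" "deltaQ (3,2) \<in> derived" "deltaQ (4,1) \<in> derived"
proof -
  define x1 where "x1 = deltaQ (1::nat,4::nat)"
  define x2 where "x2 = deltaQ (2::nat,3::nat)"
  define x3 where "x3 = deltaQ (3::nat,2::nat)"
  define x4 where "x4 = deltaQ (4::nat,1::nat)"
  have e1: "par2_brk (1,1) (1,3) = x2 + 2 * x1 - x4"
    unfolding x1_def x2_def x4_def by (simp add: brk_formula eval_nat_numeral)
  have e2: "par2_brk (1,1) (2,2) = 2 * x3 + 2 * x2 - x4 - x1"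
    unfolding x1_def x2_def x3_def x4_def by (simp add: brk_formula eval_nat_numeral)
  have e3: "par2_brk (1,1) (3,1) = x3 + 2 * x4 - x1"
    unfolding x1_def x3_def x4_def by (simp add: brk_formula eval_nat_numeral)
  have e4: "par2_brk (1,2) (2,1) = 2 * x4 + x2 - x3 - 2 * x1"
    unfolding x1_def x2_def x3_def x4_def by (simp add: brk_formula eval_nat_numeral)
  have b: "par2_brk (1,1) (1,3) \<in> derived" "par2_brk (1,1) (2,2) \<in> derived"
    "par2_brk (1,1) (3,1) \<in> derived" "par2_brk (1,2) (2,1) \<in> derived"
    by (rule brk_D; simp)+
  note bb = b[unfolded e1 e2 e3 e4]
  have "of_nat 30 * x1 \<in> derived" unfolding c5(1)[where p=x1 and q=x2 and r=x3 and s=x4, symmetric] by (intro Ddiff Dadd Dnum bb)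
  then show "deltaQ (1,4) \<in> derived" unfolding x1_def by (rule Dcancel) simp
  have "of_nat 30 * x2 \<in> derived" unfolding c5(2)[where p=x1 and q=x2 and r=x3 and s=x4, symmetric] by (intro Ddiff Dadd Dnum bb)
  then show "deltaQ (2,3) \<in> derived" unfolding x2_def by (rule Dcancel) simp
  have "of_nat 30 * x3 \<in> derived" unfolding c5(3)[where p=x1 and q=x2 and r=x3 and s=x4, symmetric] by (intro Ddiff Dadd Dnum bb)
  then show "deltaQ (3,2) \<in> derived" unfolding x3_def by (rule Dcancel) simp
  have "of_nat 30 * x4 \<in> derived" unfolding c5(4)[where p=x1 and q=x2 and r=x3 and s=x4, symmetric] by (intro Ddiff Dadd Dnum bb)
  then show "deltaQ (4,1) \<in> derived" unfolding x4_def by (rule Dcancel) simp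
qed



lemma Dneg: "x \<in> derived \<Longrightarrow> - x \<in> derived"
  unfolding derived_def by (rule Q.span_neg)

lemma two_ab: "(a + b) + (a - b) = of_nat 2 * (a::'a::comm_ring_1)" "(a + b) - (a - b) = of_nat 2 * b"
  by (simp_all add: algebra_simps)

lemma cgen:
  fixes u v ea eb fb fa :: "'a::comm_ring_1"
  shows "- ((2*eb + of_nat (m+3)*ea - v - u) - 2*(eb + of_nat (m+3)*u - fa - 2*u) - 2*(of_nat (m+4)*v + fa - v - u) - of_nat (m+3)*(ea + of_nat (m+4)*u - v - u)
          + ((of_nat (m+3)*fa + 2*fb - v - u) - 2*(of_nat (m+3)*v + fb - 2*v - ea) - 2*(ea + of_nat (m+4)*u - v - u) - of_nat (m+3)*(of_nat (m+4)*v + fa - v - u)))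
      = of_nat (m*m+9*m+14) * (u+v)"
   "((of_nat (m+3)*fa + 2*fb - v - u) - 2*(of_nat (m+3)*v + fb - 2*v - ea) - 2*(ea + of_nat (m+4)*u - v - u) - of_nat (m+3)*(of_nat (m+4)*v + fa - v - u))
    - ((2*eb + of_nat (m+3)*ea - v - u) - 2*(eb + of_nat (m+3)*u - fa - 2*u) - 2*(of_nat (m+4)*v + fa - v - u) - of_nat (m+3)*(ea + of_nat (m+4)*u - v - u))
      = of_nat (m*m+7*m+6) * (u-v)"
  by (simp_all add: algebra_simps)

lemma ends:
  "deltaQ (1, m+5) \<in> derived \<and> deltaQ (m+5, 1) \<in> derived"
proof -
  define u where "u = deltaQ (1::nat, m+5)"
  define v where "v = deltaQ (m+5, 1::nat)"
  define e2 where "e2 = deltaQ (2::nat, m+4)"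
  define e3 where "e3 = deltaQ (3::nat, m+3)"
  define f2 where "f2 = deltaQ (m+4, 2::nat)"
  define f3 where "f3 = deltaQ (m+3, 3::nat)"
  note defs = u_def v_def e2_def e3_def f2_def f3_def
  have b1: "par2_brk (1,1) (1,m+4) = e2 + of_nat (m+4)*u - v - u"
    unfolding defs by (simp add: brk_formula eval_nat_numeral)
  have b2: "par2_brk (1,1) (m+4,1) = of_nat (m+4)*v + f2 - v - u"
    unfolding defs by (simp add: brk_formula eval_nat_numeral)
  have b3: "par2_brk (1,2) (1,m+3) = e3 + of_nat (m+3)*u - f2 - 2*u"
    unfolding defs by (simp add: brk_formula eval_nat_numeral)
  have b4: "par2_brk (2,1) (m+3,1) = of_nat (m+3)*v + f3 - 2*v - e2"
    unfolding defs by (simp add: brk_formula eval_nat_numeral)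
  have b5: "par2_brk (1,1) (2,m+3) = 2*e3 + of_nat (m+3)*e2 - v - u"
    unfolding defs by (simp add: brk_formula eval_nat_numeral)
  have b6: "par2_brk (1,1) (m+3,2) = of_nat (m+3)*f2 + 2*f3 - v - u"
    unfolding defs by (simp add: brk_formula eval_nat_numeral)
  have b: "par2_brk (1,1) (1,m+4) \<in> derived" "par2_brk (1,1) (m+4,1) \<in> derived"
    "par2_brk (1,2) (1,m+3) \<in> derived" "par2_brk (2,1) (m+3,1) \<in> derived"
    "par2_brk (1,1) (2,m+3) \<in> derived" "par2_brk (1,1) (m+3,2) \<in> derived"
    by (rule brk_D; simp)+
  note bb = b[unfolded b1 b2 b3 b4 b5 b6]
  have "of_nat (m*m+9*m+14) * (u+v) \<in> derived"
    unfolding cgen(1)[where u=u and v=v and ea=e2 and eb=e3 and fa=f2 and fb=f3 and m=m, symmetric]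
    by (intro bb Dneg Dadd Ddiff Dnum Dnat)
  then have s: "u + v \<in> derived" by (rule Dcancel) simp
  have "of_nat (m*m+7*m+6) * (u-v) \<in> derived"
    unfolding cgen(2)[where u=u and v=v and ea=e2 and eb=e3 and fa=f2 and fb=f3 and m=m, symmetric]
    by (intro bb Dneg Dadd Ddiff Dnum Dnat)
  then have d: "u - v \<in> derived" by (rule Dcancel) simp
  have "of_nat 2 * u \<in> derived" using Dadd[OF s d] unfolding two_ab .
  then have "u \<in> derived" by (rule Dcancel) simp
  moreover have "of_nat 2 * v \<in> derived" using Ddiff[OF s d] unfolding two_ab .
  then have "v \<in> derived" by (rule Dcancel) simp
  ultimately show ?thesis unfolding u_def v_def by simp
qed
lemma chain_ab: "w = of_nat a * x + of_nat c * y - v - u \<Longrightarrow> of_nat a * x = w - of_nat c * y + v + (u::'a::comm_ring_1)"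
  by (simp add: algebra_simps)

lemma chain_step:
  assumes a: "1 \<le> a" "a \<le> m+4" and h: "deltaQ (a, m+6-a) \<in> derived"
  shows "deltaQ (Suc a, m+5-a) \<in> derived"
proof -
  have c1: "a + (1 + 1) - 1 = Suc a" "m + 5 - a + (1 + 1) - 1 = m + 6 - a" "1 + (a + (m + 5 - a)) - 1 = m + 5"
    using a by auto
  have e: "par2_brk (1,1) (a, m+5-a) = of_nat a * deltaQ (Suc a, m+5-a) + of_nat (m+5-a) * deltaQ (a, m+6-a)
     - deltaQ (m+5, 1) - deltaQ (1, m+5)"
    unfolding brk_formula c1 by simp
  have b: "par2_brk (1,1) (a, m+5-a) \<in> derived" using a by (intro brk_D) auto
  have "of_nat a * deltaQ (Suc a, m+5-a) \<in> derived"
    unfolding chain_ab[OF e]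
    using ends[of m] by (intro Dadd Ddiff Dnat b h) auto
  then show ?thesis by (rule Dcancel) (use a in auto)
qed

lemma high_aux: "1 \<le> a \<Longrightarrow> a \<le> m+5 \<Longrightarrow> deltaQ (a, m+6-a) \<in> derived"
proof (induction a rule: nat_induct_at_least)
  case base
  have "m + 6 - 1 = m + 5" by simp
  then show ?case using ends[of m] by (simp add: add.commute)
next
  case (Suc a)
  then have "deltaQ (Suc a, m+5-a) \<in> derived" by (intro chain_step) auto
  moreover have "m+5-a = m + 6 - Suc a" by simp
  ultimately show ?case by simp
qed

lemma high: "1 \<le> a \<Longrightarrow> 1 \<le> b \<Longrightarrow> a + b \<ge> 6 \<Longrightarrow> deltaQ (a, b) \<in> derived"
  using high_aux[of a "a+b-6"] by simp




lemma four_cases: "(i::4) = 0 \<or> i = 1 \<or> i = 2 \<or> i = 3"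
proof (cases i)
  case (of_int z)
  then have "z = 0 \<or> z = 1 \<or> z = 2 \<or> z = 3" by auto
  then show ?thesis using of_int by auto
qed

lemma four_distinct: "(0::4) \<noteq> 1" "(0::4) \<noteq> 2" "(0::4) \<noteq> 3" "(1::4) \<noteq> 2" "(1::4) \<noteq> 3" "(2::4) \<noteq> 3"
  by simp_all

lemma all_high: "1 \<le> a \<Longrightarrow> 1 \<le> b \<Longrightarrow> a + b \<ge> 5 \<Longrightarrow> deltaQ (a, b) \<in> derived"
proof -
  assume h: "1 \<le> a" "1 \<le> b" "a + b \<ge> 5"
  show ?thesis
  proof (cases "a + b = 5")
    case True
    then have "(a,b) = (1,4) \<or> (a,b) = (2,3) \<or> (a,b) = (3,2) \<or> (a,b) = (4,1)" using h by auto
    then show ?thesis using deg5 by auto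
  next
    case False
    then show ?thesis using h high by auto
  qed
qed

lemma brk_apply: "par2_brk (a,b) (a',b') p = of_nat a' * deltaQ (a' + (a+b) - 1, b') p + of_nat b' * deltaQ (a', b' + (a+b) - 1) p
     - of_nat a * deltaQ (a + (a'+b') - 1, b) p - of_nat b * deltaQ (a, b + (a'+b') - 1) p"
  unfolding brk_formula by simp

lemma brk_deg0:
  assumes "fst p + snd p \<noteq> a + b + a' + b' - 1" "1 \<le> a" "1 \<le> b" "1 \<le> a'" "1 \<le> b'"
  shows "par2_brk (a,b) (a',b') p = 0"
proof -
  have "p \<noteq> (a' + (a+b) - 1, b')" "p \<noteq> (a', b' + (a+b) - 1)"
       "p \<noteq> (a + (a'+b') - 1, b)" "p \<noteq> (a, b + (a'+b') - 1)"
    using assms by (auto simp del: One_nat_def)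
  then show ?thesis unfolding brk_apply by (simp add: deltaQ_def)
qed
lemma brk_low:
  assumes "1 \<le> a" "1 \<le> b" "1 \<le> a'" "1 \<le> b'"
  shows "par2_brk (a,b) (a',b') (1,1) = 0" "par2_brk (a,b) (a',b') (1,2) = 0"
    "par2_brk (a,b) (a',b') (2,1) = 0"
    "par2_brk (a,b) (a',b') (1,3) + par2_brk (a,b) (a',b') (3,1) = 0"
proof -
  show "par2_brk (a,b) (a',b') (1,1) = 0" using assms by (intro brk_deg0) auto
  show "par2_brk (a,b) (a',b') (1,2) = 0"
  proof (cases "a + b + a' + b' = 4")
    case True
    then have "a = 1" "b = 1" "a' = 1" "b' = 1" using assms by auto
    then show ?thesis by (simp add: brk_apply deltaQ_def)
  next
    case False
    then show ?thesis using assms by (intro brk_deg0) auto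
  qed
  show "par2_brk (a,b) (a',b') (2,1) = 0"
  proof (cases "a + b + a' + b' = 4")
    case True
    then have "a = 1" "b = 1" "a' = 1" "b' = 1" using assms by auto
    then show ?thesis by (simp add: brk_apply deltaQ_def)
  next
    case False
    then show ?thesis using assms by (intro brk_deg0) auto
  qed
  show "par2_brk (a,b) (a',b') (1,3) + par2_brk (a,b) (a',b') (3,1) = 0"
  proof (cases "a + b + a' + b' = 5")
    case True
    then have "(a,b,a',b') = (1,1,1,2) \<or> (a,b,a',b') = (1,1,2,1) \<or> (a,b,a',b') = (1,2,1,1) \<or> (a,b,a',b') = (2,1,1,1)"
      using assms by auto
    then show ?thesis
    proof (elim disjE)
      assume "(a,b,a',b') = (1,1,1,2)" then have "a=1" "b=1" "a'=1" "b'=2" by auto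
      then show ?thesis by (simp add: brk_apply deltaQ_def)
    next
      assume "(a,b,a',b') = (1,1,2,1)" then have "a=1" "b=1" "a'=2" "b'=1" by auto
      then show ?thesis by (simp add: brk_apply deltaQ_def)
    next
      assume "(a,b,a',b') = (1,2,1,1)" then have "a=1" "b=2" "a'=1" "b'=1" by auto
      then show ?thesis by (simp add: brk_apply deltaQ_def)
    next
      assume "(a,b,a',b') = (2,1,1,1)" then have "a=2" "b=1" "a'=1" "b'=1" by auto
      then show ?thesis by (simp add: brk_apply deltaQ_def)
    qed
  next
    case False
    then show ?thesis using assms by (simp add: brk_deg0)
  qed
qed




definition phi :: "(nat \<times> nat \<Rightarrow> rat) \<Rightarrow> (4 \<Rightarrow> rat)" where
  "phi x = (\<lambda>i. if i = 0 then x (1,1) else if i = 1 then x (1,2) else if i = 2 then x (2,1) else x (1,3) + x (3,1))"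

definition Kset :: "(nat \<times> nat \<Rightarrow> rat) set" where
  "Kset = {x. x (1,1) = 0 \<and> x (1,2) = 0 \<and> x (2,1) = 0 \<and> x (1,3) + x (3,1) = 0}"

lemma phi_zero: "phi x = 0 \<longleftrightarrow> x \<in> Kset"
proof
  assume h: "phi x = 0"
  have "phi x 0 = 0" "phi x 1 = 0" "phi x 2 = 0" "phi x 3 = 0" using h by simp_all
  then show "x \<in> Kset" unfolding phi_def Kset_def using four_distinct by (simp split: if_splits)
next
  assume "x \<in> Kset"
  then show "phi x = 0" unfolding phi_def Kset_def fun_eq_iff using four_cases by auto
qed

lemma brk_low':
  assumes "1 \<le> fst c" "1 \<le> snd c" "1 \<le> fst d" "1 \<le> snd d"
  shows "par2_brk c d (1,1) = 0" "par2_brk c d (1,2) = 0" "par2_brk c d (2,1) = 0"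
    "par2_brk c d (1,3) + par2_brk c d (3,1) = 0"
  using brk_low[of "fst c" "snd c" "fst d" "snd d"] assms by auto

lemma lie_apply: "lie x y p = (\<Sum>c\<in>{i. x i \<noteq> 0}. \<Sum>d\<in>{i. y i \<noteq> 0}. x c * y d * par2_brk c d p)"
  unfolding lie_def by (simp add: sum_fun_apply smultQ_def)

lemma lie_K: "x \<in> Lam1 \<Longrightarrow> y \<in> Lam1 \<Longrightarrow> lie x y \<in> Kset"
proof -
  assume x: "x \<in> Lam1" and y: "y \<in> Lam1"
  have pos: "1 \<le> fst c \<and> 1 \<le> snd c \<and> 1 \<le> fst d \<and> 1 \<le> snd d"
    if "c \<in> {i. x i \<noteq> 0}" "d \<in> {i. y i \<noteq> 0}" for c d
    using x y that unfolding Lam1_def by (cases c, cases d) auto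
  have z: "par2_brk c d (1,1) = 0" "par2_brk c d (1,2) = 0" "par2_brk c d (2,1) = 0"
    "par2_brk c d (1,3) + par2_brk c d (3,1) = 0"
    if "x c \<noteq> 0" "y d \<noteq> 0" for c d
    using pos[of c d] brk_low'[of c d] that by auto
  have "lie x y (1,1) = 0" unfolding lie_apply
    by (intro sum.neutral ballI) (metis (mono_tags) mem_Collect_eq mult_zero_right z(1))
  moreover have "lie x y (1,2) = 0" unfolding lie_apply
    by (intro sum.neutral ballI) (metis (mono_tags) mem_Collect_eq mult_zero_right z(2))
  moreover have "lie x y (2,1) = 0" unfolding lie_apply
    by (intro sum.neutral ballI) (metis (mono_tags) mem_Collect_eq mult_zero_right z(3))
  moreover have "lie x y (1,3) + lie x y (3,1) = 0"
  proof -
    have "lie x y (1,3) + lie x y (3,1) = (\<Sum>c\<in>{i. x i \<noteq> 0}. \<Sum>d\<in>{i. y i \<noteq> 0}. x c * y d * (par2_brk c d (1,3) + par2_brk c d (3,1)))"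
      unfolding lie_apply sum.distrib[symmetric] by (simp add: algebra_simps)
    also have "\<dots> = 0"
      by (intro sum.neutral ballI) (metis (mono_tags) mem_Collect_eq mult_zero_right z(4))
    finally show ?thesis .
  qed
  ultimately show ?thesis unfolding Kset_def by simp
qed

lemma derived_K: "derived \<subseteq> Kset"
  unfolding derived_def
proof (rule Q.span_minimal)
  show "{lie x y |x y. x \<in> Lam1 \<and> y \<in> Lam1} \<subseteq> Kset" using lie_K by blast
  show "Q.subspace Kset" unfolding Q.subspace_def Kset_def
    by (auto simp: smultQ_def simp flip: distrib_left)
qed

lemma fin_rep: "finite {i. g i \<noteq> 0} \<Longrightarrow> g = (\<Sum>p\<in>{i. g i \<noteq> 0}. smultQ (g p) (deltaQ p))"
proof (rule ext)
  fix q assume f: "finite {i. g i \<noteq> 0}"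
  have "(\<Sum>p\<in>{i. g i \<noteq> 0}. smultQ (g p) (deltaQ p)) q = (\<Sum>p\<in>{i. g i \<noteq> 0}. if q = p then g p else 0)"
    unfolding sum_fun_apply by (intro sum.cong) (auto simp: smultQ_def deltaQ_def)
  also have "\<dots> = g q" using f by (simp add: sum.delta)
  finally show "g q = (\<Sum>p\<in>{i. g i \<noteq> 0}. smultQ (g p) (deltaQ p)) q" by simp
qed

lemma K_derived:
  assumes x: "x \<in> Lam1" and k: "x \<in> Kset"
  shows "x \<in> derived"
proof -
  define g where "g = x - smultQ (x (1,3)) (deltaQ (1,3) - deltaQ (3,1)) - smultQ (x (2,2)) (deltaQ (2,2))"
  have gv: "g p = (if p = (1,3) \<or> p = (3,1) \<or> p = (2,2) then 0 else x p)" for p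
    using k unfolding g_def Kset_def by (auto simp: smultQ_def deltaQ_def)
  have sub: "{i. g i \<noteq> 0} \<subseteq> {i. x i \<noteq> 0}" using gv by auto
  have fin: "finite {i. g i \<noteq> 0}" using x sub unfolding Lam1_def by (blast intro: finite_subset)
  have inD: "deltaQ p \<in> derived" if "g p \<noteq> 0" for p
  proof -
    obtain a b where p: "p = (a,b)" by (cases p)
    have xp: "x p \<noteq> 0" "p \<noteq> (1,3)" "p \<noteq> (3,1)" "p \<noteq> (2,2)" using that gv[of p] by (auto split: if_splits)
    then have ab: "1 \<le> a" "1 \<le> b" using x unfolding Lam1_def p by auto
    have "p \<noteq> (1,1)" "p \<noteq> (1,2)" "p \<noteq> (2,1)" using k xp(1) unfolding Kset_def by auto
    then have "a + b \<ge> 5" using ab xp unfolding p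
      by (cases a; cases b; auto simp: eval_nat_numeral)
    then show ?thesis unfolding p using ab all_high by blast
  qed
  have gD: "g \<in> derived"
    by (subst fin_rep[OF fin]) (unfold derived_def, intro Q.span_sum Q.span_scale, use inD in \<open>auto simp: derived_def\<close>)
  have "x = g + smultQ (x (1,3)) (deltaQ (1,3) - deltaQ (3,1)) + smultQ (x (2,2)) (deltaQ (2,2))"
    unfolding g_def by simp
  also have "\<dots> \<in> derived" using gD deg4 by (intro Dadd Dsc)
  finally show ?thesis .
qed




theorem corollary6p2:
  "\<exists>\<phi> :: (nat \<times> nat \<Rightarrow> rat) \<Rightarrow> (4 \<Rightarrow> rat).
     (\<forall>x\<in>Lam1. \<forall>y\<in>Lam1. \<phi> (x + y) = \<phi> x + \<phi> y) \<and>
     (\<forall>x\<in>Lam1. \<forall>r. \<phi> (smultQ r x) = smultQ r (\<phi> x)) \<and>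
     \<phi> ` Lam1 = UNIV \<and>
     (\<forall>x\<in>Lam1. \<phi> x = 0 \<longleftrightarrow> x \<in> derived)"
proof (intro exI[of _ phi] conjI ballI allI)
  fix x y :: "nat \<times> nat \<Rightarrow> rat"
  show "phi (x + y) = phi x + phi y" by (simp add: phi_def fun_eq_iff)
next
  fix x :: "nat \<times> nat \<Rightarrow> rat" and r
  show "phi (smultQ r x) = smultQ r (phi x)" by (simp add: phi_def smultQ_def fun_eq_iff algebra_simps)
next
  fix x :: "nat \<times> nat \<Rightarrow> rat" assume x: "x \<in> Lam1"
  show "phi x = 0 \<longleftrightarrow> x \<in> derived"
    using phi_zero[of x] derived_K K_derived[OF x] by blast
next
  show "phi ` Lam1 = UNIV"
  proof (intro set_eqI iffI)
    fix w :: "4 \<Rightarrow> rat" assume "w \<in> UNIV"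
    define x where "x = (\<lambda>p::nat\<times>nat. if p = (1,1) then w 0 else if p = (1,2) then w 1 else if p = (2,1) then w 2
        else if p = (1,3) then w 3 else 0)"
    have "{i. x i \<noteq> 0} \<subseteq> {(1,1),(1,2),(2,1),(1,3)}" unfolding x_def by auto
    then have "finite {i. x i \<noteq> 0}" by (rule finite_subset) simp
    moreover have "\<forall>i. x i \<noteq> 0 \<longrightarrow> fst i \<ge> 1 \<and> snd i \<ge> 1" unfolding x_def by auto
    ultimately have xL: "x \<in> Lam1" unfolding Lam1_def by blast
    have "phi x = w"
    proof
      fix i :: 4
      show "phi x i = w i" using four_cases[of i] unfolding phi_def x_def by auto
    qed
    then show "w \<in> phi ` Lam1" using xL by blast
  qed simp
qed


end
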